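(* Let $n\ge 1$, $b\in\mathbb{R}^n$, and let $A\in\mathbb{R}^{n\times n}$ be symmetric with all eigenvalues $\lambda_i$ satisfying $0<\lambda_i<2$, $i=1,\dots,n$. Define $g(x)=x-(Ax-b)$ and $f(x)=g(x)-x=-(Ax-b)$. Let $\bar x_k\in\mathbb{R}^n$, $\bar d_k\in\mathbb{R}^n\setminus\{0\}$ and $\beta_k\in\mathbb{R}$ be arbitrary, and set $$x_{k+1}=\bar x_k+\beta_k\bar d_k,\qquad \hat\beta_k=\frac{\langle \bar d_k,\,g(x_{k+1})-\bar x_k\rangle}{\|\bar d_k\|^2},\qquad \hat x_{k+1}=\bar x_k+\hat\beta_k\bar d_k.$$ Then $$\|f(\hat x_{k+1})\|_{A^{-1}}\le \|f(x_{k+1})\|_{A^{-1}},$$ where $\|x\|_{A^{-1}}=\sqrt{x^\intercal A^{-1}x}$.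
   Context: $\|\cdot\|$ denotes the Euclidean norm on $\mathbb{R}^n$ and $\langle x,y\rangle=x^\intercal y$ the standard inner product. Since $A$ is symmetric positive definite, $\|x\|_{A^{-1}}=\sqrt{x^\intercal A^{-1}x}$ is a norm. In the paper, $\bar x_k$ and $\bar d_k=\bar y_k-\bar x_k$ arise from an Anderson acceleration step, and $\hat\beta_k$ is the value of $\beta$ minimizing $\|\bar x_k+\beta\bar d_k-g(x_{k+1})\|$. *)

theory Defs
  imports "HOL-Analysis.Analysis"
begin

definition is_eigenvalue :: "real^'n^'n \<Rightarrow> real \<Rightarrow> bool" where
  "is_eigenvalue A \<mu> \<longleftrightarrow> (\<exists>v. v \<noteq> 0 \<and> A *v v = \<mu> *\<^sub>R v)"

definition norm_Ainv :: "real^'n^'n \<Rightarrow> real^'n \<Rightarrow> real" where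
  "norm_Ainv A x = sqrt (x \<bullet> (matrix_inv A *v x))"

end

theory Submission
  imports Defs
begin

lemma sym_dot:
  fixes A :: "real^'n^'n"
  assumes "transpose A = A"
  shows "(A *v x) \<bullet> y = x \<bullet> (A *v y)"
proof -
  have "(A *v x) \<bullet> y = (x v* transpose A) \<bullet> y" by simp
  also have "\<dots> = x \<bullet> (transpose A *v y)" by (rule dot_lmul_matrix)
  finally show ?thesis using assms by simp
qed

lemma quad_bound:
  fixes A :: "real^'n^'n"
  assumes symA: "transpose A = A"
    and eig: "\<And>\<mu>. is_eigenvalue A \<mu> \<Longrightarrow> 0 < \<mu> \<and> \<mu> < 2"
  shows "x \<bullet> (A *v x) \<le> 2 * (x \<bullet> x)"
proof -
  let ?h = "\<lambda>x. x \<bullet> (A *v x)"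
  have ne: "sphere (0::real^'n) 1 \<noteq> {}"
    using norm_axis_1 by (metis mem_sphere_0 empty_iff)
  have cont: "continuous_on (sphere 0 1) ?h"
    by (intro continuous_intros linear_continuous_on bounded_linear.linear) auto
  obtain u where u: "u \<in> sphere 0 1" and umax: "\<And>y. y \<in> sphere 0 1 \<Longrightarrow> ?h y \<le> ?h u"
    using continuous_attains_sup[OF compact_sphere ne cont] by blast
  define \<mu> where "\<mu> = ?h u"
  have uu: "u \<bullet> u = 1" using u by (simp add: dot_square_norm)
  have psd: "0 \<le> \<mu> * (x \<bullet> x) - ?h x" for x
  proof (cases "x = 0")
    case True then show ?thesis by simp
  next
    case False
    define w where "w = (1 / norm x) *\<^sub>R x"
    have "w \<in> sphere 0 1" using False by (simp add: w_def)
    hence "?h w \<le> \<mu>" using umax \<mu>_def by blast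
    moreover have "?h x = (norm x)^2 * ?h w"
      using False by (simp add: w_def matrix_vector_mult_scaleR power2_eq_square)
    moreover have "x \<bullet> x = (norm x)^2" by (simp add: dot_square_norm)
    ultimately show ?thesis
      by (metis diff_ge_0_iff_ge mult.commute mult_right_mono zero_le_power2)
  qed
  define B where "B = (\<lambda>x. \<mu> *\<^sub>R x - A *v x)"
  have Bq: "\<mu> * (x \<bullet> x) - ?h x = x \<bullet> B x" for x
    by (simp add: B_def inner_diff_right)
  have Bsym: "x \<bullet> B y = y \<bullet> B x" for x y
    using sym_dot[OF symA, of y x] by (simp add: B_def inner_diff_right inner_commute)
  have Blin: "B (x + t *\<^sub>R y) = B x + t *\<^sub>R B y" for x y t
    by (simp add: B_def algebra_simps)
  have Bu0: "u \<bullet> B u = 0" using Bq[of u] uu \<mu>_def by simp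
  define v where "v = B u"
  define c where "c = v \<bullet> v"
  define e where "e = v \<bullet> B v"
  have e0: "e \<ge> 0" using psd[of v] Bq[of v] e_def by simp
  have key: "0 \<le> 2 * t * c + t^2 * e" for t
  proof -
    have "0 \<le> (u + t *\<^sub>R v) \<bullet> B (u + t *\<^sub>R v)" using psd Bq by metis
    also have "\<dots> = u \<bullet> B u + t * (u \<bullet> B v) + t * (v \<bullet> B u) + t^2 * (v \<bullet> B v)"
      by (simp add: Blin inner_add_left inner_add_right power2_eq_square algebra_simps)
    also have "\<dots> = 2 * t * c + t^2 * e"
      using Bu0 Bsym[of u v] by (simp add: c_def e_def v_def)
    finally show ?thesis .
  qed
  have "c = 0"
  proof (rule ccontr)
    assume cn: "c \<noteq> 0"
    define t where "t = - c / (e + 1)"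
    have q: "e + 1 > 0" using e0 by linarith
    have ht: "t * (e + 1) = - c" using q by (simp add: t_def)
    have "(2 * t * c + t^2 * e) * (e + 1)^2 = 2*c*(e+1)*(t*(e+1)) + e*(t*(e+1))^2"
      by (simp add: power2_eq_square algebra_simps)
    also have "\<dots> = c^2 * (- e - 2)" unfolding ht by (simp add: power2_eq_square algebra_simps)
    also have "\<dots> < 0" using cn e0 by (intro mult_pos_neg) auto
    finally have "(2 * t * c + t^2 * e) * (e + 1)^2 < 0" .
    moreover have "(e+1)^2 > 0" using q by simp
    ultimately have "2 * t * c + t^2 * e < 0" by (meson mult_pos_pos not_less zero_le_mult_iff less_le_not_le)
    thus False using key[of t] by linarith
  qed
  hence "B u = 0" by (simp add: c_def v_def)
  hence "A *v u = \<mu> *\<^sub>R u" by (simp add: B_def)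
  moreover have "u \<noteq> 0" using uu by auto
  ultimately have "is_eigenvalue A \<mu>" unfolding is_eigenvalue_def by blast
  hence "\<mu> < 2" using eig by blast
  moreover have "x \<bullet> x \<ge> 0" by simp
  ultimately have "\<mu> * (x \<bullet> x) \<le> 2 * (x \<bullet> x)" by (simp add: mult_right_mono)
  thus ?thesis using psd[of x] by linarith
qed

theorem theorem2:
  fixes A :: "real^'n^'n" and b xbar dbar :: "real^'n" and \<beta> :: real
    and g f :: "real^'n \<Rightarrow> real^'n"
  assumes symA: "transpose A = A"
    and eig: "\<And>\<mu>. is_eigenvalue A \<mu> \<Longrightarrow> 0 < \<mu> \<and> \<mu> < 2"
    and g_def: "\<And>x. g x = x - (A *v x - b)"
    and f_def: "\<And>x. f x = g x - x"
    and d_nz: "dbar \<noteq> 0"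
  shows "let x1 = xbar + \<beta> *\<^sub>R dbar;
             beta_hat = (dbar \<bullet> (g x1 - xbar)) / (norm dbar)^2;
             xhat1 = xbar + beta_hat *\<^sub>R dbar
         in norm_Ainv A (f xhat1) \<le> norm_Ainv A (f x1)"
proof -
  have ker: "\<forall>x. A *v x = 0 \<longrightarrow> x = 0"
  proof (intro allI impI)
    fix x assume "A *v x = 0"
    show "x = 0"
    proof (rule ccontr)
      assume "x \<noteq> 0"
      hence "is_eigenvalue A 0" unfolding is_eigenvalue_def using \<open>A *v x = 0\<close> by auto
      thus False using eig by blast
    qed
  qed
  hence "invertible A" using matrix_left_invertible_ker invertible_left_inverse by blast
  define M where "M = matrix_inv A"
  have MA: "A ** M = mat 1 \<and> M ** A = mat 1"
    using \<open>invertible A\<close> unfolding invertible_def M_def matrix_inv_def by (rule someI_ex)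
  have MAv: "M *v (A *v x) = x" for x using MA by (simp add: matrix_vector_mul_assoc)
  have AMv: "A *v (M *v x) = x" for x using MA by (simp add: matrix_vector_mul_assoc)
  define r0 where "r0 = b - A *v xbar"
  define p where "p = dbar \<bullet> r0"
  define a where "a = dbar \<bullet> (A *v dbar)"
  define D where "D = dbar \<bullet> dbar"
  define c where "c = r0 \<bullet> (M *v r0)"
  have fl: "f (xbar + t *\<^sub>R dbar) = r0 - t *\<^sub>R (A *v dbar)" for t
    by (simp add: f_def g_def r0_def algebra_simps)
  have Q: "norm_Ainv A (f (xbar + t *\<^sub>R dbar)) = sqrt (c - 2 * t * p + t^2 * a)" for t
  proof -
    have s1: "(A *v dbar) \<bullet> (M *v r0) = p"
      using sym_dot[OF symA, of dbar "M *v r0"] AMv by (simp add: p_def)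
    have "(r0 - t *\<^sub>R (A *v dbar)) \<bullet> (M *v (r0 - t *\<^sub>R (A *v dbar)))
        = c - t * ((A *v dbar) \<bullet> (M *v r0)) - t * (r0 \<bullet> dbar) + t^2 * a"
      by (simp add: matrix_vector_mult_diff_distrib matrix_vector_mult_scaleR MAv
          inner_diff_left inner_diff_right c_def a_def power2_eq_square inner_commute algebra_simps)
    also have "\<dots> = c - 2 * t * p + t^2 * a" using s1 by (simp add: p_def inner_commute)
    finally show ?thesis by (simp add: norm_Ainv_def fl M_def)
  qed
  have D0: "D > 0" using d_nz by (simp add: D_def)
  have aD: "a \<le> 2 * D" using quad_bound[OF symA eig] by (simp add: a_def D_def)
  define bh where "bh = (dbar \<bullet> (g (xbar + \<beta> *\<^sub>R dbar) - xbar)) / (norm dbar)^2"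
  have bh: "bh = \<beta> + (p - \<beta> * a) / D"
  proof -
    have "g (xbar + \<beta> *\<^sub>R dbar) - xbar = \<beta> *\<^sub>R dbar + r0 - \<beta> *\<^sub>R (A *v dbar)"
      by (simp add: g_def r0_def algebra_simps)
    hence "dbar \<bullet> (g (xbar + \<beta> *\<^sub>R dbar) - xbar) = \<beta> * D + p - \<beta> * a"
      by (simp add: inner_add_right inner_diff_right D_def p_def a_def)
    thus ?thesis using D0 by (simp add: bh_def D_def dot_square_norm[symmetric] field_simps)
  qed
  define e where "e = (p - \<beta> * a) / D"
  have "(c - 2 * bh * p + bh^2 * a) - (c - 2 * \<beta> * p + \<beta>^2 * a) = e^2 * (a - 2 * D)"
    using D0 unfolding bh e_def by (simp add: field_simps power2_eq_square)
  moreover have "e^2 * (a - 2 * D) \<le> 0" using aD by (simp add: mult_nonneg_nonpos)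
  ultimately have "c - 2 * bh * p + bh^2 * a \<le> c - 2 * \<beta> * p + \<beta>^2 * a" by linarith
  thus ?thesis unfolding Let_def bh_def[symmetric] Q by simp
qed

end
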